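(* Let $[\mathbf v,d]=[v_{11},v_{12},v_{21},v_{22},d]$ with $\mathbf v_1=(v_{11},v_{12})\neq0$, $\mathbf v_2=(v_{21},v_{22})\neq0$ and $d\neq0$. If the following three conditions all hold: (1) $v_{11}^2+v_{12}^2\neq0$ and $v_{21}^2+v_{22}^2\neq0$; (2) $v_{21}\neq0$ or $v_{11}^2-d^2\neq0$; (3) $v_{11}\neq0$ or $v_{21}^2-d^2\neq0$; then neither $L_1$ nor $L_2$ is a polynomial factor of $h$. Moreover, if any one of the conditions (1), (2), (3) fails, then $L_1$ or $L_2$ is a polynomial factor of $h$.
   Context: In variables $u,y_1,y_2$: $L_1=v_{11}(u-y_1)-v_{12}y_2$, $L_2=-v_{21}(u+y_1)-v_{22}y_2$, $f_1=(u-y_1)^2+y_2^2$, $f_2=(u+y_1)^2+y_2^2$, and $h=(L_2^2f_1+L_1^2f_2-d^2f_1f_2)^2-4L_1^2L_2^2f_1f_2$, a homogeneous polynomial of degree $8$. Parameters are complex numbers. *)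

theory Defs
  imports Complex_Main "HOL-Computational_Algebra.Polynomial"
begin

text \<open>The polynomial ring C[u,y1,y2] is modelled as the iterated univariate
polynomial ring ((C[u])[y1])[y2], i.e. the type complex poly poly poly.
Divisibility (polynomial factor) is the ring divisibility dvd of this ring.\<close>

type_synonym mpoly3 = "complex poly poly poly"

definition cst :: "complex \<Rightarrow> mpoly3" where
  "cst c = [:[:[:c:]:]:]"

definition varU :: mpoly3 where
  "varU = [:[:[:0, 1:]:]:]"

definition varY1 :: mpoly3 where
  "varY1 = [:[:0, 1:]:]"

definition varY2 :: mpoly3 where
  "varY2 = [:0, 1:]"

definition polyL1 :: "complex \<Rightarrow> complex \<Rightarrow> mpoly3" where
  "polyL1 v11 v12 = cst v11 * (varU - varY1) - cst v12 * varY2"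

definition polyL2 :: "complex \<Rightarrow> complex \<Rightarrow> mpoly3" where
  "polyL2 v21 v22 = - (cst v21 * (varU + varY1)) - cst v22 * varY2"

definition polyf1 :: mpoly3 where
  "polyf1 = (varU - varY1)^2 + varY2^2"

definition polyf2 :: mpoly3 where
  "polyf2 = (varU + varY1)^2 + varY2^2"

definition polyh :: "complex \<Rightarrow> complex \<Rightarrow> complex \<Rightarrow> complex \<Rightarrow> complex \<Rightarrow> mpoly3" where
  "polyh v11 v12 v21 v22 d =
     (let L1 = polyL1 v11 v12; L2 = polyL2 v21 v22 in
      (L2^2 * polyf1 + L1^2 * polyf2 - cst (d^2) * polyf1 * polyf2)^2
        - cst 4 * L1^2 * L2^2 * polyf1 * polyf2)"

end

theory Submission imports Defs begin
lemma cst_mult: "cst (a*b) = cst a * cst b" by (simp add: cst_def)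
lemma cst_add: "cst (a+b) = cst a + cst b" by (simp add: cst_def)
lemma cst_diff: "cst (a-b) = cst a - cst b" by (simp add: cst_def)
lemma cst_minus: "cst (-a) = - cst a" by (simp add: cst_def)
lemma cst_1: "cst 1 = 1" by (simp add: cst_def one_pCons)
lemma cst_pow: "cst (a^n) = cst a ^ n" by (induction n) (simp_all add: cst_1 cst_mult)

definition ev :: "complex \<Rightarrow> complex \<Rightarrow> complex \<Rightarrow> mpoly3 \<Rightarrow> complex" where
  "ev u y1 y2 p = poly (poly (poly p [:[:y2:]:]) [:y1:]) u"

lemma ev_simps:
  "ev u y1 y2 (p*q) = ev u y1 y2 p * ev u y1 y2 q"
  "ev u y1 y2 (p+q) = ev u y1 y2 p + ev u y1 y2 q"
  "ev u y1 y2 (p-q) = ev u y1 y2 p - ev u y1 y2 q"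
  "ev u y1 y2 (-p) = - ev u y1 y2 p"
  "ev u y1 y2 (p^n) = ev u y1 y2 p ^ n"
  "ev u y1 y2 (cst c) = c"
  "ev u y1 y2 varU = u"
  "ev u y1 y2 varY1 = y1"
  "ev u y1 y2 varY2 = y2"
  by (simp_all add: ev_def cst_def varU_def varY1_def varY2_def poly_power)

lemma ev_h: "ev u y1 y2 (polyh v11 v12 v21 v22 d) =
  (let L1 = v11*(u-y1) - v12*y2; L2 = -(v21*(u+y1)) - v22*y2;
       f1 = (u-y1)^2+y2^2; f2 = (u+y1)^2+y2^2 in
   (L2^2 * f1 + L1^2 * f2 - d^2 * f1 * f2)^2 - 4 * L1^2 * L2^2 * f1 * f2)"
  by (simp add: polyh_def polyL1_def polyL2_def polyf1_def polyf2_def ev_simps Let_def)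

lemma dvd_ev: "p dvd q \<Longrightarrow> ev u y1 y2 p = 0 \<Longrightarrow> ev u y1 y2 q = 0"
  by (auto simp: dvd_def ev_simps)

lemma quad_nonroot:
  fixes A B C :: complex
  assumes "\<not> (A = 0 \<and> B = 0 \<and> C = 0)"
  shows "\<exists>b\<in>{0,1,-1}. A*b^2 + B*b + C \<noteq> 0"
  using assms by (rule contrapos_np) auto

lemma notdvd1:
  fixes v11 v12 v21 v22 d :: complex
  assumes d: "d \<noteq> 0" and f: "v11^2 + v12^2 \<noteq> 0" and c3: "v11 \<noteq> 0 \<or> v21^2 - d^2 \<noteq> 0"
  shows "\<not> polyL1 v11 v12 dvd polyh v11 v12 v21 v22 d"
proof
  assume dv: "polyL1 v11 v12 dvd polyh v11 v12 v21 v22 d"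
  define A where "A = v21^2 - d^2"
  define B where "B = 2*v21*v22*v11"
  define C where "C = v11^2*(v22^2 - d^2)"
  have "\<not> (A = 0 \<and> B = 0 \<and> C = 0)"
  proof
    assume h: "A = 0 \<and> B = 0 \<and> C = 0"
    then have "v21^2 = d^2" by (simp add: A_def)
    then have "v21 \<noteq> 0" using d by auto
    then have "v11 \<noteq> 0" using c3 \<open>v21^2 = d^2\<close> by auto
    then have "v22 = 0" using h \<open>v21 \<noteq> 0\<close> by (simp add: B_def)
    then show False using h d \<open>v11 \<noteq> 0\<close> by (simp add: C_def)
  qed
  then obtain b where b: "A*b^2 + B*b + C \<noteq> 0" using quad_nonroot by blast
  define u where "u = (v12 + b)/2"
  define y1 where "y1 = (b - v12)/2"
  have um: "u - y1 = v12" "u + y1 = b" by (simp_all add: u_def y1_def field_simps)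
  have "ev u y1 v11 (polyL1 v11 v12) = 0"
    by (simp add: polyL1_def ev_simps um)
  then have "ev u y1 v11 (polyh v11 v12 v21 v22 d) = 0" using dv dvd_ev by blast
  moreover have "ev u y1 v11 (polyh v11 v12 v21 v22 d) = (v12^2+v11^2)^2 * (A*b^2 + B*b + C)^2"
    unfolding ev_h Let_def um by (simp add: A_def B_def C_def algebra_simps power2_eq_square)
  ultimately show False using f b by (simp add: add.commute)
qed

lemma notdvd2:
  fixes v11 v12 v21 v22 d :: complex
  assumes d: "d \<noteq> 0" and f: "v21^2 + v22^2 \<noteq> 0" and c2: "v21 \<noteq> 0 \<or> v11^2 - d^2 \<noteq> 0"
  shows "\<not> polyL2 v21 v22 dvd polyh v11 v12 v21 v22 d"
proof
  assume dv: "polyL2 v21 v22 dvd polyh v11 v12 v21 v22 d"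
  define A where "A = v11^2 - d^2"
  define B where "B = 2*v11*v12*v21"
  define C where "C = v21^2*(v12^2 - d^2)"
  have "\<not> (A = 0 \<and> B = 0 \<and> C = 0)"
  proof
    assume h: "A = 0 \<and> B = 0 \<and> C = 0"
    then have "v11^2 = d^2" by (simp add: A_def)
    then have "v11 \<noteq> 0" using d by auto
    then have "v21 \<noteq> 0" using c2 \<open>v11^2 = d^2\<close> by auto
    then have "v12 = 0" using h \<open>v11 \<noteq> 0\<close> by (simp add: B_def)
    then show False using h d \<open>v21 \<noteq> 0\<close> by (simp add: C_def)
  qed
  then obtain a where a: "A*a^2 + B*a + C \<noteq> 0" using quad_nonroot by blast
  define u where "u = (a + v22)/2"
  define y1 where "y1 = (v22 - a)/2"
  have um: "u - y1 = a" "u + y1 = v22" by (simp_all add: u_def y1_def field_simps)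
  have "ev u y1 (-v21) (polyL2 v21 v22) = 0"
    by (simp add: polyL2_def ev_simps um)
  then have "ev u y1 (-v21) (polyh v11 v12 v21 v22 d) = 0" using dv dvd_ev by blast
  moreover have "ev u y1 (-v21) (polyh v11 v12 v21 v22 d) = (v22^2+v21^2)^2 * (A*a^2 + B*a + C)^2"
    unfolding ev_h Let_def um by (simp add: A_def B_def C_def algebra_simps power2_eq_square)
  ultimately show False using f a by (simp add: add.commute)
qed

lemma cst_4: "cst 4 = 4"
proof -
  have "cst 4 = cst 1 + cst 1 + cst 1 + cst 1" by (simp add: cst_add[symmetric])
  then show ?thesis by (simp add: cst_1)
qed

lemma h_eq1: "polyh v11 v12 v21 v22 d =
   (polyf1 * (polyL2 v21 v22^2 - cst (d^2) * polyf2))^2 + polyL1 v11 v12^2 *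
   (2 * (polyf1 * (polyL2 v21 v22^2 - cst (d^2) * polyf2)) * polyf2 + polyL1 v11 v12^2 * polyf2^2
     - 4 * polyL2 v21 v22^2 * polyf1 * polyf2)"
  unfolding polyh_def Let_def cst_4 by algebra

lemma h_eq2: "polyh v11 v12 v21 v22 d =
   (polyf2 * (polyL1 v11 v12^2 - cst (d^2) * polyf1))^2 + polyL2 v21 v22^2 *
   (2 * (polyf2 * (polyL1 v11 v12^2 - cst (d^2) * polyf1)) * polyf1 + polyL2 v21 v22^2 * polyf1^2
     - 4 * polyL1 v11 v12^2 * polyf1 * polyf2)"
  unfolding polyh_def Let_def cst_4 by algebra

lemma dvd_sq: "(x::'a::comm_ring_1) dvd X \<Longrightarrow> h = X^2 + x^2*R \<Longrightarrow> x dvd h"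
  by (simp add: power2_eq_square)

lemma cst_inv: "c \<noteq> 0 \<Longrightarrow> cst c * cst (1/c) = 1"
  by (simp add: cst_mult[symmetric] cst_1)

lemma dv1a:
  assumes "(v11, v12) \<noteq> (0::complex, 0)" "v11^2 + v12^2 = 0"
  shows "polyL1 v11 v12 dvd polyf1"
proof -
  have v: "v11 \<noteq> 0" using assms by auto
  define s where "s = v12 / v11"
  have ss: "s * s = -1" using assms v unfolding s_def by (simp add: field_simps power2_eq_square add_eq_0_iff)
  have e2: "cst s * cst s = -1" using ss by (simp add: cst_mult[symmetric] cst_minus cst_1)
  have e3: "cst v12 = cst s * cst v11" using v by (simp add: s_def cst_mult[symmetric])
  have e1: "cst v11 * cst (1/v11) = 1" using v by (rule cst_inv)
  have "polyf1 = polyL1 v11 v12 * (cst (1/v11) * ((varU - varY1) + cst s * varY2))"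
    unfolding polyf1_def polyL1_def e3 using e1 e2 by algebra
  then show ?thesis by (metis dvd_triv_left)
qed

lemma dv1b:
  assumes "(v11, v12) \<noteq> (0::complex, 0)" "v11 = 0" "v21^2 = d^2"
  shows "polyL1 v11 v12 dvd (polyL2 v21 v22^2 - cst (d^2) * polyf2)"
proof -
  have v: "v12 \<noteq> 0" using assms by auto
  have e1: "cst v12 * cst (1/v12) = 1" using v by (rule cst_inv)
  have e2: "cst (d^2) = cst v21 ^ 2" using assms by (simp add: cst_pow[symmetric])
  have e0: "cst v11 = 0" using assms by (simp add: cst_def)
  have "polyL2 v21 v22^2 - cst (d^2) * polyf2 = polyL1 v11 v12 * (- cst (1/v12) *
     (2 * cst v21 * cst v22 * (varU + varY1) + (cst v22^2 - cst v21^2) * varY2))"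
    unfolding polyf2_def polyL1_def polyL2_def e2 e0 using e1 by algebra
  then show ?thesis by (metis dvd_triv_left)
qed

lemma dv2a:
  assumes "(v21, v22) \<noteq> (0::complex, 0)" "v21^2 + v22^2 = 0"
  shows "polyL2 v21 v22 dvd polyf2"
proof -
  have v: "v21 \<noteq> 0" using assms by auto
  define s where "s = v22 / v21"
  have ss: "s * s = -1" using assms v unfolding s_def by (simp add: field_simps power2_eq_square add_eq_0_iff)
  have e2: "cst s * cst s = -1" using ss by (simp add: cst_mult[symmetric] cst_minus cst_1)
  have e3: "cst v22 = cst s * cst v21" using v by (simp add: s_def cst_mult[symmetric])
  have e1: "cst v21 * cst (1/v21) = 1" using v by (rule cst_inv)
  have "polyf2 = polyL2 v21 v22 * (- cst (1/v21) * ((varU + varY1) - cst s * varY2))"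
    unfolding polyf2_def polyL2_def e3 using e1 e2 by algebra
  then show ?thesis by (metis dvd_triv_left)
qed

lemma dv2b:
  assumes "(v21, v22) \<noteq> (0::complex, 0)" "v21 = 0" "v11^2 = d^2"
  shows "polyL2 v21 v22 dvd (polyL1 v11 v12^2 - cst (d^2) * polyf1)"
proof -
  have v: "v22 \<noteq> 0" using assms by auto
  have e1: "cst v22 * cst (1/v22) = 1" using v by (rule cst_inv)
  have e2: "cst (d^2) = cst v11 ^ 2" using assms by (simp add: cst_pow[symmetric])
  have e0: "cst v21 = 0" using assms by (simp add: cst_def)
  have "polyL1 v11 v12^2 - cst (d^2) * polyf1 = polyL2 v21 v22 * (- cst (1/v22) *
     (- 2 * cst v11 * cst v12 * (varU - varY1) + (cst v12^2 - cst v11^2) * varY2))"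
    unfolding polyf1_def polyL1_def polyL2_def e2 e0 using e1 by algebra
  then show ?thesis by (metis dvd_triv_left)
qed

theorem lemma8p3:
  fixes v11 v12 v21 v22 d :: complex
  assumes "(v11, v12) \<noteq> (0, 0)" and "(v21, v22) \<noteq> (0, 0)" and "d \<noteq> 0"
  defines "c1 \<equiv> v11^2 + v12^2 \<noteq> 0 \<and> v21^2 + v22^2 \<noteq> 0"
    and "c2 \<equiv> v21 \<noteq> 0 \<or> v11^2 - d^2 \<noteq> 0"
    and "c3 \<equiv> v11 \<noteq> 0 \<or> v21^2 - d^2 \<noteq> 0"
  shows "(c1 \<and> c2 \<and> c3 \<longrightarrow>
            \<not> polyL1 v11 v12 dvd polyh v11 v12 v21 v22 d \<and>
            \<not> polyL2 v21 v22 dvd polyh v11 v12 v21 v22 d)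
       \<and> (\<not> c1 \<or> \<not> c2 \<or> \<not> c3 \<longrightarrow>
            polyL1 v11 v12 dvd polyh v11 v12 v21 v22 d \<or>
            polyL2 v21 v22 dvd polyh v11 v12 v21 v22 d)"
proof (intro conjI impI)
  assume "c1 \<and> c2 \<and> c3"
  then show "\<not> polyL1 v11 v12 dvd polyh v11 v12 v21 v22 d"
    "\<not> polyL2 v21 v22 dvd polyh v11 v12 v21 v22 d"
    using notdvd1[of d v11 v12 v21 v22] notdvd2[of d v21 v22 v11 v12] assms(3)
    unfolding c1_def c2_def c3_def by auto
next
  assume "\<not> c1 \<or> \<not> c2 \<or> \<not> c3"
  then consider "v11^2 + v12^2 = 0" | "v21^2 + v22^2 = 0" | "v21 = 0" "v11^2 = d^2"
    | "v11 = 0" "v21^2 = d^2"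
    unfolding c1_def c2_def c3_def by auto
  then show "polyL1 v11 v12 dvd polyh v11 v12 v21 v22 d \<or>
            polyL2 v21 v22 dvd polyh v11 v12 v21 v22 d"
  proof cases
    case 1
    then have "polyL1 v11 v12 dvd polyf1" using dv1a assms(1) by blast
    then show ?thesis by (metis dvd_sq h_eq1 dvd_mult2)
  next
    case 2
    then have "polyL2 v21 v22 dvd polyf2" using dv2a assms(2) by blast
    then show ?thesis by (metis dvd_sq h_eq2 dvd_mult2)
  next
    case 3
    then have "polyL2 v21 v22 dvd (polyL1 v11 v12^2 - cst (d^2) * polyf1)" using dv2b assms(2) by blast
    then show ?thesis by (metis dvd_sq h_eq2 dvd_mult)
  next
    case 4
    then have "polyL1 v11 v12 dvd (polyL2 v21 v22^2 - cst (d^2) * polyf2)" using dv1b assms(1) by blast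
    then show ?thesis by (metis dvd_sq h_eq1 dvd_mult)
  qed
qed
end
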